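(* Let $\phi$ be the monoid endomorphism of $\{1,-1\}^*$ determined by $\phi(1)=1\,1\,(-1)$ and $\phi(-1)=1\,(-1)\,(-1)$, and let $w_\alpha=\lim_{n\to\infty}\phi^n(1)$ be the infinite sequence over $\{1,-1\}$ obtained by iterating $\phi$ starting from the word $1$ (each $\phi^n(1)$ is a prefix of $\phi^{n+1}(1)$). Then $w_\alpha$ is cube-free, i.e. it contains no factor of the form $uuu$ with $u$ a nonempty finite word. *)

theory Defs
  imports Main
begin

text \<open>Finite words over the alphabet {1,-1} are represented as int lists.\<close>

fun phi_letter :: "int \<Rightarrow> int list" where
  "phi_letter a = (if a = 1 then [1, 1, -1] else [1, -1, -1])"

definition phi :: "int list \<Rightarrow> int list" where
  "phi xs = concat (map phi_letter xs)"

text \<open>Since phi^n(1) has length 3^n > i for n = i+1 and each phi^n(1) is a prefix of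
  phi^(n+1)(1), the i-th letter of the limit is the i-th letter of phi^(i+1)(1).\<close>
definition w_alpha :: "nat \<Rightarrow> int" where
  "w_alpha i = ((phi ^^ (Suc i)) [1]) ! i"

definition cube_free :: "(nat \<Rightarrow> 'a) \<Rightarrow> bool" where
  "cube_free w \<longleftrightarrow> \<not> (\<exists>i m. m > 0 \<and>
      (\<forall>k<m. w (i + k) = w (i + m + k) \<and> w (i + k) = w (i + 2 * m + k)))"

end

theory Submission
  imports Defs
begin

lemma phi_append: "phi (xs @ ys) = phi xs @ phi ys"
  by (simp add: phi_def)

lemma length_phi_letter: "length (phi_letter a) = 3"
  by simp

lemma length_phi: "length (phi xs) = 3 * length xs"
  by (induction xs) (auto simp: phi_def)

lemma phi_Cons: "phi (x # xs) = phi_letter x @ phi xs"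
  by (simp add: phi_def)

lemma phi_nth: "i < length xs \<Longrightarrow> r < 3 \<Longrightarrow> phi xs ! (3*i + r) = phi_letter (xs!i) ! r"
proof (induction xs arbitrary: i)
  case Nil then show ?case by simp
next
  case (Cons x xs)
  show ?case
  proof (cases i)
    case 0 then show ?thesis using Cons.prems
      by (simp add: phi_Cons nth_append length_phi_letter del: phi_letter.simps)
  next
    case (Suc j)
    have "3*i + r = (3*j + r) + 3" using Suc by simp
    then have "phi (x#xs) ! (3*i+r) = phi xs ! (3*j+r)"
      by (simp add: phi_Cons nth_append length_phi_letter del: phi_letter.simps)
    then show ?thesis using Cons Suc by simp
  qed
qed

lemma lt3: "i < (3::nat) ^ i"
  by (induction i) auto

definition P :: "nat \<Rightarrow> int list" where "P n = (phi ^^ n) [1]"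

lemma P_Suc: "P (Suc n) = phi (P n)"
  by (simp add: P_def)

lemma length_P: "length (P n) = 3 ^ n"
  by (induction n) (auto simp: P_def length_phi)

lemma P_ext: "\<exists>zs. P (Suc n) = P n @ zs"
proof (induction n)
  case 0 then show ?case by (simp add: P_def phi_def)
next
  case (Suc n)
  then obtain zs where "P (Suc n) = P n @ zs" by blast
  then have "P (Suc (Suc n)) = P (Suc n) @ phi zs" by (simp add: P_Suc phi_append)
  then show ?case by blast
qed

lemma P_ext2: "n \<le> m \<Longrightarrow> \<exists>zs. P m = P n @ zs"
proof (induction m rule: dec_induct)
  case base then show ?case by simp
next
  case (step m)
  then obtain zs where "P m = P n @ zs" by blast
  moreover obtain ys where "P (Suc m) = P m @ ys" using P_ext by blast
  ultimately show ?case by auto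
qed

lemma P_nth_mono: "n \<le> m \<Longrightarrow> i < 3 ^ n \<Longrightarrow> P m ! i = P n ! i"
  using P_ext2[of n m] length_P[of n] by (auto simp: nth_append)

lemma w_P: "i < 3 ^ n \<Longrightarrow> w_alpha i = P n ! i"
proof -
  assume a: "i < 3 ^ n"
  have b: "i < 3 ^ Suc i" using lt3[of i] by simp
  have "w_alpha i = P (Suc i) ! i" by (simp add: w_alpha_def P_def)
  also have "\<dots> = P (max n (Suc i)) ! i" using P_nth_mono[OF _ b, of "max n (Suc i)"] by simp
  also have "\<dots> = P n ! i" using P_nth_mono[OF _ a, of "max n (Suc i)"] by simp
  finally show ?thesis .
qed

lemma w_rec: "r < 3 \<Longrightarrow> w_alpha (3*i + r) = phi_letter (w_alpha i) ! r"
proof -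
  assume r: "r < 3"
  have a: "i < 3 ^ Suc i" using lt3[of i] by simp
  have "3*i + r < 3 ^ Suc (Suc i)" using a r by simp
  then have "w_alpha (3*i + r) = P (Suc (Suc i)) ! (3*i+r)" by (rule w_P)
  also have "\<dots> = phi_letter (P (Suc i) ! i) ! r" using a r phi_nth[of i "P (Suc i)" r] length_P[of "Suc i"] by (simp add: P_Suc del: phi_letter.simps)
  also have "\<dots> = phi_letter (w_alpha i) ! r" using w_P[OF a] by simp
  finally show ?thesis .
qed

lemma w0: "w_alpha (3*i) = 1" using w_rec[of 0 i] by simp
lemma w1: "w_alpha (3*i+1) = (if w_alpha i = 1 then 1 else -1)" using w_rec[of 1 i] by simp
lemma w2: "w_alpha (3*i+2) = -1" using w_rec[of 2 i] by simp

lemma w_vals: "w_alpha j = 1 \<or> w_alpha j = -1"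
proof -
  have "j = 3*(j div 3) + j mod 3" by simp
  moreover have "j mod 3 = 0 \<or> j mod 3 = 1 \<or> j mod 3 = 2" by auto
  ultimately show ?thesis
  proof (elim disjE)
    assume "j = 3*(j div 3) + j mod 3" "j mod 3 = 0"
    then show ?thesis using w0[of "j div 3"] by simp
  next
    assume "j = 3*(j div 3) + j mod 3" "j mod 3 = 1"
    then show ?thesis using w1[of "j div 3"] by (metis (full_types))
  next
    assume "j = 3*(j div 3) + j mod 3" "j mod 3 = 2"
    then show ?thesis using w2[of "j div 3"] by metis
  qed
qed

lemma w1_inj: "w_alpha (3*i+1) = w_alpha (3*j+1) \<Longrightarrow> w_alpha i = w_alpha j"
  using w1[of i] w1[of j] w_vals[of i] w_vals[of j] by (auto split: if_splits)

lemma w_mod0: "j mod 3 = 0 \<Longrightarrow> w_alpha j = 1"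
  using w0[of "j div 3"] by (metis add.right_neutral mult_div_mod_eq)
lemma w_mod2: "j mod 3 = 2 \<Longrightarrow> w_alpha j = -1"
  using w2[of "j div 3"] by (metis mult_div_mod_eq)


lemma no_cube: "0 < m \<Longrightarrow> \<not> (\<forall>k<m. w_alpha (i + k) = w_alpha (i + m + k) \<and> w_alpha (i + k) = w_alpha (i + 2 * m + k))"
proof (induction m arbitrary: i rule: less_induct)
  case (less m)
  show ?case
  proof
    assume c: "\<forall>k<m. w_alpha (i + k) = w_alpha (i + m + k) \<and> w_alpha (i + k) = w_alpha (i + 2 * m + k)"
    show False
    proof (cases "m mod 3 = 0")
      case False
      have e: "w_alpha i = w_alpha (i+m)" "w_alpha i = w_alpha (i+2*m)" using c less.prems by (metis add_0_right)+
      have "i mod 3 = 0 \<or> (i+m) mod 3 = 0 \<or> (i+2*m) mod 3 = 0" using False by presburger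
      then have "w_alpha i = 1" using e w_mod0 by metis
      moreover have "i mod 3 = 2 \<or> (i+m) mod 3 = 2 \<or> (i+2*m) mod 3 = 2" using False by presburger
      then have "w_alpha i = -1" using e w_mod2 by metis
      ultimately show False by simp
    next
      case True
      then obtain m' where m': "m = 3*m'" by auto
      have mp: "0 < m'" "m' < m" using m' less.prems by auto
      obtain q where q: "i \<le> 3*q+1" "3*q+1 \<le> i+2"
      proof -
        have "i \<le> 3*((i+1) div 3)+1 \<and> 3*((i+1) div 3)+1 \<le> i+2" by presburger
        then show ?thesis using that by blast
      qed
      have "\<forall>k<m'. w_alpha (q + k) = w_alpha (q + m' + k) \<and> w_alpha (q + k) = w_alpha (q + 2 * m' + k)"
      proof (intro allI impI)
        fix k assume k: "k < m'"
        define d where "d = 3*q+1+3*k - i"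
        have d: "d < m" "3*q+1+3*k = i + d" using q k m' unfolding d_def by auto
        have "w_alpha (3*(q+k)+1) = w_alpha (3*(q+m'+k)+1)" "w_alpha (3*(q+k)+1) = w_alpha (3*(q+2*m'+k)+1)"
        proof -
          have e1: "3*(q+k)+1 = i + d" and e2: "3*(q+m'+k)+1 = i + m + d" and e3: "3*(q+2*m'+k)+1 = i + 2*m + d"
            using d m' by auto
          have f: "w_alpha (i+d) = w_alpha (i+m+d)" "w_alpha (i+d) = w_alpha (i+2*m+d)"
            using c d(1) by auto
          show "w_alpha (3*(q+k)+1) = w_alpha (3*(q+m'+k)+1)" "w_alpha (3*(q+k)+1) = w_alpha (3*(q+2*m'+k)+1)"
            unfolding e1 e2 e3 using f by auto
        qed
        then show "w_alpha (q + k) = w_alpha (q + m' + k) \<and> w_alpha (q + k) = w_alpha (q + 2 * m' + k)"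
          using w1_inj by (metis add.assoc)
      qed
      then show False using less.IH[OF mp(2) mp(1)] by blast
    qed
  qed
qed

theorem mainTheorem2:
  shows "cube_free w_alpha"
  unfolding cube_free_def using no_cube by blast

end
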